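(* Let $f:\mathbb{R}^n\to\mathbb{R}$ be a polynomial of degree at most $4$ that can be written as \[ f(x)=g(x)^T G\, g(x)+c^T h(x), \] where $g:\mathbb{R}^n\to\mathbb{R}^p$ and $h:\mathbb{R}^n\to\mathbb{R}^r$ are vector-valued polynomials each of whose components is a linear or quadratic polynomial, $G\in\mathbb{R}^{p\times p}$ is positive definite, and $c\in\mathbb{R}^r$. Let $\lambda$ be the minimum eigenvalue of $G$. Assume: (i) there exist $L_1,R>0$ such that $\|h(x)\|/\|g(x)\|\le R$ whenever $\|x\|>L_1$; (ii)(a) if $f(0)\neq0$, $L>L_1$ is such that $\|g(x)\|>\max\{|f(0)|,(1+\|c\|R)/\lambda\}$ whenever $\|x\|>L$; (ii)(b) if $f(0)=0$, $L>L_1$ is such that $\|g(x)\|>\|c\|R/\lambda$ whenever $\|x\|>L$. Then every global minimizer $x^*$ of $f$ satisfies $\|x^*\|\le L$, i.e., $\operatorname{argmin} f\subset B[0,L]=\{x:\|x\|\le L\}$.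
   Context: $\|\cdot\|$ denotes the Euclidean norm. *)

theory Defs
  imports "HOL-Analysis.Analysis"
begin

definition poly_fun_deg_le :: "nat \<Rightarrow> (real^'n \<Rightarrow> real) \<Rightarrow> bool" where
  "poly_fun_deg_le d f \<longleftrightarrow>
     (\<exists>A coef. finite A \<and> (\<forall>\<alpha>\<in>A. (\<Sum>i\<in>UNIV. \<alpha> i) \<le> d) \<and>
        (\<forall>x. f x = (\<Sum>\<alpha>\<in>A. coef \<alpha> * (\<Prod>i\<in>UNIV. (x $ i) ^ (\<alpha> i)))))"

definition lin_or_quad :: "(real^'n \<Rightarrow> real) \<Rightarrow> bool" where
  "lin_or_quad f \<longleftrightarrow> poly_fun_deg_le 2 f \<and> \<not> poly_fun_deg_le 0 f"

definition pos_def :: "real^'p^'p \<Rightarrow> bool" where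
  "pos_def G \<longleftrightarrow> transpose G = G \<and> (\<forall>v. v \<noteq> 0 \<longrightarrow> v \<bullet> (G *v v) > 0)"

definition is_eigenvalue :: "real^'p^'p \<Rightarrow> real \<Rightarrow> bool" where
  "is_eigenvalue G \<mu> \<longleftrightarrow> (\<exists>v. v \<noteq> 0 \<and> G *v v = \<mu> *\<^sub>R v)"

definition min_eigenvalue :: "real^'p^'p \<Rightarrow> real \<Rightarrow> bool" where
  "min_eigenvalue G lam \<longleftrightarrow> is_eigenvalue G lam \<and> (\<forall>\<mu>. is_eigenvalue G \<mu> \<longrightarrow> lam \<le> \<mu>)"

end

theory Submission
  imports Defs
begin

lemma sym_dot:
  fixes G :: "real^'p^'p"
  assumes "transpose G = G"
  shows "x \<bullet> (G *v y) = (G *v x) \<bullet> y"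
  by (metis assms dot_lmul_matrix transpose_matrix_vector)

lemma rayleigh:
  fixes G :: "real^'p^'p"
  assumes pd: "pos_def G" and lam: "min_eigenvalue G lam"
  shows "lam * (v \<bullet> v) \<le> v \<bullet> (G *v v)"
proof -
  have symG: "transpose G = G" using pd by (simp add: pos_def_def)
  define q where "q = (\<lambda>v::real^'p. v \<bullet> (G *v v))"
  have cq: "continuous_on (sphere 0 1) q" unfolding q_def
    by (intro continuous_intros)
  have ne: "sphere (0::real^'p) 1 \<noteq> {}" by simp
  obtain v0 where v0: "v0 \<in> sphere 0 1" and v0min: "\<And>y. y \<in> sphere 0 1 \<Longrightarrow> q v0 \<le> q y"
    using continuous_attains_inf[OF compact_sphere ne cq] by blast
  define m where "m = q v0"
  have n0: "norm v0 = 1" using v0 by simp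
  have qscale: "q (a *\<^sub>R y) = a^2 * q y" for a y
    by (simp add: q_def matrix_vector_mult_scaleR power2_eq_square)
  have qge: "m * (y \<bullet> y) \<le> q y" for y
  proof (cases "y = 0")
    case True then show ?thesis by (simp add: q_def)
  next
    case False
    have "(1/norm y) *\<^sub>R y \<in> sphere 0 1" using False by simp
    then have "m \<le> q ((1/norm y) *\<^sub>R y)" using v0min m_def by blast
    also have "\<dots> = q y / (norm y)^2" by (simp add: qscale power_divide)
    finally have "m * (norm y)^2 \<le> q y" using False by (simp add: field_simps)
    then show ?thesis by (simp add: power2_norm_eq_inner)
  qed
  define u where "u = G *v v0 - m *\<^sub>R v0"
  have exp: "q (v0 + t *\<^sub>R u) - m * ((v0 + t *\<^sub>R u) \<bullet> (v0 + t *\<^sub>R u))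
      = 2 * t * (u \<bullet> u) + t^2 * (q u - m * (u \<bullet> u))" for t
  proof -
    have vv: "v0 \<bullet> v0 = 1" using n0 by (metis inner_real_def norm_eq_1)
    have s: "v0 \<bullet> (G *v u) = (G *v v0) \<bullet> u" by (rule sym_dot[OF symG])
    have "v0 \<bullet> u = q v0 - m" by (simp add: u_def q_def inner_diff_right vv)
    then have vu: "v0 \<bullet> u = 0" by (simp add: m_def)
    have "u \<bullet> u = (G *v v0) \<bullet> u - m * (v0 \<bullet> u)"
      by (subst (1) u_def) (simp add: inner_diff_left)
    then have uu: "u \<bullet> u = (G *v v0) \<bullet> u" using vu by simp
    have mq: "v0 \<bullet> (G *v v0) = m" by (simp add: m_def q_def)
    have cm: "u \<bullet> (G *v v0) = (G *v v0) \<bullet> u" by (rule inner_commute)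
    show ?thesis
      by (simp add: mq cm q_def matrix_vector_right_distrib matrix_vector_mult_scaleR inner_add_left inner_add_right
          s vu uu vv inner_commute[of u v0] power2_eq_square algebra_simps)
  qed
  have u0: "u = 0"
  proof (rule ccontr)
    assume "u \<noteq> 0"
    then have a: "u \<bullet> u > 0" by simp
    define K where "K = q u - m * (u \<bullet> u)"
    define s where "s = (u \<bullet> u) / (\<bar>K\<bar> + 1)"
    have spos: "s > 0" using a by (simp add: s_def)
    have "0 \<le> 2 * (-s) * (u \<bullet> u) + (-s)^2 * K"
      using qge[of "v0 + (-s) *\<^sub>R u"] exp[of "-s"] K_def by simp
    then have "2 * (u \<bullet> u) \<le> s * K" using spos by (simp add: power2_eq_square algebra_simps)
    moreover have "s * K \<le> s * \<bar>K\<bar>" using spos by (simp add: mult_left_mono)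
    moreover have "s * \<bar>K\<bar> \<le> u \<bullet> u" unfolding s_def using a
      by (simp add: field_simps)
    ultimately show False using a by linarith
  qed
  have "is_eigenvalue G m" unfolding is_eigenvalue_def
    using u0 n0 by (intro exI[of _ v0]) (auto simp: u_def)
  then have "lam \<le> m" using lam by (simp add: min_eigenvalue_def)
  moreover have "0 \<le> v \<bullet> v" by simp
  ultimately have "lam * (v \<bullet> v) \<le> m * (v \<bullet> v)" by (simp add: mult_right_mono)
  then show ?thesis using qge[of v] q_def by simp
qed

theorem theorem3:
  fixes f :: "real^'n \<Rightarrow> real"
    and g :: "real^'n \<Rightarrow> real^'p"
    and h :: "real^'n \<Rightarrow> real^'r"
    and G :: "real^'p^'p"
    and c :: "real^'r"
    and lam L1 R L :: real
  assumes f_poly: "poly_fun_deg_le 4 f"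
    and f_def: "\<And>x. f x = g x \<bullet> (G *v g x) + c \<bullet> h x"
    and g_poly: "\<And>i. lin_or_quad (\<lambda>x. g x $ i)"
    and h_poly: "\<And>i. lin_or_quad (\<lambda>x. h x $ i)"
    and G_pd: "pos_def G"
    and lam: "min_eigenvalue G lam"
    and L1_pos: "L1 > 0" and R_pos: "R > 0"
    and hyp_i: "\<And>x. norm x > L1 \<Longrightarrow> norm (h x) / norm (g x) \<le> R"
    and L_gt: "L > L1"
    and hyp_iia: "f 0 \<noteq> 0 \<Longrightarrow>
        (\<forall>x. norm x > L \<longrightarrow> norm (g x) > max \<bar>f 0\<bar> ((1 + norm c * R) / lam))"
    and hyp_iib: "f 0 = 0 \<Longrightarrow> (\<forall>x. norm x > L \<longrightarrow> norm (g x) > norm c * R / lam)"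
  shows "{x. \<forall>y. f x \<le> f y} \<subseteq> cball 0 L"
proof
  fix x assume xm: "x \<in> {x. \<forall>y. f x \<le> f y}"
  show "x \<in> cball 0 L"
  proof (rule ccontr)
    assume "x \<notin> cball 0 L"
    then have xL: "norm x > L" by (simp add: dist_norm)
    have lampos: "lam > 0"
    proof -
      obtain v where v: "v \<noteq> 0" "G *v v = lam *\<^sub>R v"
        using lam by (auto simp: min_eigenvalue_def is_eigenvalue_def)
      have "v \<bullet> (G *v v) > 0" using G_pd v(1) by (simp add: pos_def_def)
      then have "lam * (v \<bullet> v) > 0" using v(2) by simp
      moreover have "v \<bullet> v > 0" using v(1) by simp
      ultimately show ?thesis by (simp add: zero_less_mult_iff)
    qed
    define a where "a = norm (g x)"
    have ga: "g x \<bullet> g x = a^2" by (simp add: a_def power2_norm_eq_inner)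
    have gpos: "a > 0"
    proof (cases "f 0 = 0")
      case True
      have "a > norm c * R / lam" using hyp_iib[OF True] xL a_def by blast
      moreover have "norm c * R / lam \<ge> 0" using lampos R_pos by simp
      ultimately show ?thesis by linarith
    next
      case False
      have "a > max \<bar>f 0\<bar> ((1 + norm c * R) / lam)" using hyp_iia[OF False] xL a_def by blast
      then show ?thesis using False by linarith
    qed
    have hR: "norm (h x) \<le> R * a"
      using hyp_i[of x] xL L_gt gpos by (simp add: a_def divide_le_eq)
    have ch: "c \<bullet> h x \<ge> - (norm c * (R * a))"
    proof -
      have "\<bar>c \<bullet> h x\<bar> \<le> norm c * norm (h x)" by (rule Cauchy_Schwarz_ineq2)
      also have "\<dots> \<le> norm c * (R * a)" using hR by (simp add: mult_left_mono)
      finally show ?thesis by linarith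
    qed
    have fx: "f x \<ge> a * (lam * a - norm c * R)"
      using rayleigh[OF G_pd lam, of "g x"] ch f_def[of x] ga
      by (simp add: power2_eq_square algebra_simps)
    have "f x > f 0"
    proof (cases "f 0 = 0")
      case True
      have "a > norm c * R / lam" using hyp_iib[OF True] xL a_def by blast
      then have "lam * a - norm c * R > 0" using lampos by (simp add: field_simps)
      then have "a * (lam * a - norm c * R) > 0" using gpos by simp
      then show ?thesis using fx True by linarith
    next
      case False
      have m: "a > max \<bar>f 0\<bar> ((1 + norm c * R) / lam)" using hyp_iia[OF False] xL a_def by blast
      then have "a > (1 + norm c * R) / lam" by simp
      then have "lam * a - norm c * R > 1" using lampos by (simp add: field_simps)
      then have "a * (lam * a - norm c * R) > a * 1" using gpos by (intro mult_strict_left_mono) auto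
      moreover have "a > f 0" using m by linarith
      ultimately show ?thesis using fx by linarith
    qed
    moreover have "f x \<le> f 0" using xm by simp
    ultimately show False by linarith
  qed
qed

end
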